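(* Let $\bm{L}_t\in\mathbb{R}^{n_1\times n_1}$ and $\bm{R}_t\in\mathbb{R}^{n_2\times n_2}$ be diagonal matrices with positive diagonal entries. For any $\bm{A}\in\mathbb{R}^{n_1\times n_1}$, $\bm{B}\in\mathbb{R}^{n_1\times n_2}$ and $\bm{C}\in\mathbb{R}^{n_2\times n_2}$, $$\|\bm{A}\bm{B}\|_{\mathcal{W}_t}\le\|\bm{A}\|_{\bm{L}_t^{1/4}}\|\bm{B}\|_{\mathcal{W}_t}\quad\text{and}\quad \|\bm{B}\bm{C}\|_{\mathcal{W}_t}\le\mathrm{cond}(\bm{R}_t^{-1/4})\,\|\bm{B}\|_{\mathcal{W}_t}\,\|\bm{C}\|_{\bm{R}_t^{1/4}}.$$
   Context: $\|\bm{Z}\|_{\mathcal{W}_t}^2=\langle\bm{L}_t^{1/4}\bm{Z}\bm{R}_t^{1/4},\bm{Z}\rangle$ (equivalently $\|\bm{Z}\|_{\mathcal{W}_t}=\|\bm{L}_t^{1/8}\bm{Z}\bm{R}_t^{1/8}\|_F$). For a symmetric positive definite $\bm{M}$ of size $k$, $\|\bm{x}\|_{\bm{M}}=\langle\bm{M}\bm{x},\bm{x}\rangle^{1/2}$ on $\mathbb{R}^k$ and for $\bm{A}\in\mathbb{R}^{k\times k}$, $\|\bm{A}\|_{\bm{M}}=\sup_{\bm{x}\neq0}\|\bm{A}\bm{x}\|_{\bm{M}}/\|\bm{x}\|_{\bm{M}}$. $\mathrm{cond}(\bm{Z})=\sigma_{\max}(\bm{Z})/\sigma_{\min}(\bm{Z})$.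 In the paper $\bm{L}_t=\epsilon_t\bm{I}+\mathrm{diag}(\bm{G}_t\bm{G}_t^T)$, $\bm{R}_t=\epsilon_t\bm{I}+\mathrm{diag}(\bm{G}_t^T\bm{G}_t)$, $\epsilon_t>0$. *)

theory Defs
  imports "HOL-Analysis.Analysis"
begin

text \<open>Matrices are Cartesian-space matrices: real^'c^'r has rows indexed by 'r
and columns by 'c.\<close>

definition is_pos_diag :: "real^'n^'n \<Rightarrow> bool" where
  "is_pos_diag M \<longleftrightarrow> (\<forall>i j. i \<noteq> j \<longrightarrow> M$i$j = 0) \<and> (\<forall>i. M$i$i > 0)"

definition diag_powr :: "real^'n^'n \<Rightarrow> real \<Rightarrow> real^'n^'n" where
  "diag_powr M p = (\<chi> i j. if i = j then (M$i$i) powr p else 0)"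

definition frob_inner :: "real^'c^'r \<Rightarrow> real^'c^'r \<Rightarrow> real" where
  "frob_inner X Y = (\<Sum>i\<in>UNIV. \<Sum>j\<in>UNIV. X$i$j * Y$i$j)"

definition wnorm :: "real^'n1^'n1 \<Rightarrow> real^'n2^'n2 \<Rightarrow> real^'n2^'n1 \<Rightarrow> real" where
  "wnorm L R Z = sqrt (frob_inner (diag_powr L (1/4) ** Z ** diag_powr R (1/4)) Z)"

definition vec_Mnorm :: "real^'n^'n \<Rightarrow> real^'n \<Rightarrow> real" where
  "vec_Mnorm M x = sqrt ((M *v x) \<bullet> x)"

definition mat_Mnorm :: "real^'n^'n \<Rightarrow> real^'n^'n \<Rightarrow> real" where
  "mat_Mnorm M A = (SUP x\<in>{x. x \<noteq> 0}. vec_Mnorm M (A *v x) / vec_Mnorm M x)"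

definition sigma_max :: "real^'n^'n \<Rightarrow> real" where
  "sigma_max Z = (SUP x\<in>{x. norm x = 1}. norm (Z *v x))"

definition sigma_min :: "real^'n^'n \<Rightarrow> real" where
  "sigma_min Z = (INF x\<in>{x. norm x = 1}. norm (Z *v x))"

definition cond :: "real^'n^'n \<Rightarrow> real" where
  "cond Z = sigma_max Z / sigma_min Z"

end

theory Submission imports Defs begin

lemma if0_mult: "(if P then a else (0::real)) * b = (if P then a * b else 0)" by simp

lemma mult_if0: "b * (if P then a else (0::real)) = (if P then b * a else 0)" by simp

definition Dm :: "('n::finite \<Rightarrow> real) \<Rightarrow> real^'n^'n" where
  "Dm d = (\<chi> i j. if i = j then d i else 0)"

lemma diag_powr_Dm: "diag_powr M p = Dm (\<lambda>i. M$i$i powr p)"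
  by (simp add: diag_powr_def Dm_def)

lemma Dm_mulv: "Dm d *v x = (\<chi> i. d i * x$i)"
  by (simp add: Dm_def matrix_vector_mult_def if0_mult)

lemma Dm_quad: "(Dm d *v x) \<bullet> x = (\<Sum>i\<in>UNIV. d i * (x$i)^2)"
  by (simp add: Dm_mulv inner_vec_def power2_eq_square mult.assoc)

lemma norm2_vec: "(norm (x::real^'n))^2 = (\<Sum>i\<in>UNIV. (x$i)^2)"
  by (simp only: power2_norm_eq_inner) (simp add: inner_vec_def power2_eq_square)

lemma wq_bounds:
  assumes "\<And>i. a \<le> d i" "\<And>i. d i \<le> b"
  shows "a * (norm (x::real^'n))^2 \<le> (\<Sum>i\<in>UNIV. d i * (x$i)^2)"
    "(\<Sum>i\<in>UNIV. d i * (x$i)^2) \<le> b * (norm x)^2"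
  unfolding norm2_vec sum_distrib_left
  by (auto intro!: sum_mono mult_right_mono assms)

lemma Dm_mm: "(Dm l ** Z ** Dm r) $ i $ j = l i * Z$i$j * r j"
  by (simp add: Dm_def matrix_matrix_mult_def if0_mult mult_if0 sum.delta)

lemma wnorm_eq: "wnorm L R Z = sqrt (\<Sum>i\<in>UNIV. \<Sum>j\<in>UNIV. (L$i$i powr (1/4)) * (R$j$j powr (1/4)) * (Z$i$j)^2)"
  unfolding wnorm_def diag_powr_Dm frob_inner_def Dm_mm
  by (simp add: power2_eq_square mult_ac)

lemma vMn: "vec_Mnorm (Dm d) x = sqrt (\<Sum>i\<in>UNIV. d i * (x$i)^2)"
  by (simp add: vec_Mnorm_def Dm_quad)

lemma vMn_bounds:
  assumes "0 < a" "\<And>i. a \<le> d i" "\<And>i. d i \<le> b"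
  shows "sqrt a * norm x \<le> vec_Mnorm (Dm d) x" "vec_Mnorm (Dm d) x \<le> sqrt b * norm x"
proof -
  have "sqrt a * norm x = sqrt (a * (norm x)^2)" by (simp add: real_sqrt_mult)
  also have "\<dots> \<le> vec_Mnorm (Dm d) x" unfolding vMn
    by (rule real_sqrt_le_mono, rule wq_bounds(1)[OF assms(2,3)])
  finally show "sqrt a * norm x \<le> vec_Mnorm (Dm d) x" .
  have "vec_Mnorm (Dm d) x \<le> sqrt (b * (norm x)^2)" unfolding vMn
    by (rule real_sqrt_le_mono, rule wq_bounds(2)[OF assms(2,3)])
  also have "\<dots> = sqrt b * norm x" by (simp add: real_sqrt_mult)
  finally show "vec_Mnorm (Dm d) x \<le> sqrt b * norm x" .
qed

lemma mnorm_props: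
  assumes "0 < a" "\<And>i. a \<le> d i" "\<And>i. d i \<le> b"
  shows "vec_Mnorm (Dm d) (A *v x) \<le> mat_Mnorm (Dm d) A * vec_Mnorm (Dm d) x"
    "0 \<le> mat_Mnorm (Dm d) A"
proof -
  let ?N = "vec_Mnorm (Dm d)"
  have Nnn: "0 \<le> ?N y" for y unfolding vMn
    using assms by (auto intro!: sum_nonneg mult_nonneg_nonneg order_trans[OF less_imp_le[OF assms(1)] assms(2)])
  have Npos: "0 < ?N y" if "y \<noteq> 0" for y
  proof -
    have "0 < sqrt a * norm y" using that assms(1) by simp
    also have "\<dots> \<le> ?N y" by (rule vMn_bounds[OF assms])
    finally show ?thesis .
  qed
  obtain B where B: "0 < B" "\<And>y. norm (A *v y) \<le> B * norm y"
    using linear_bounded_pos[OF matrix_vector_mul_linear] by blast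
  have bdd: "bdd_above ((\<lambda>y. ?N (A *v y) / ?N y) ` {y. y \<noteq> 0})"
  proof (rule bdd_aboveI2)
    fix y :: "real^'a" assume "y \<in> {y. y \<noteq> 0}"
    hence y: "y \<noteq> 0" by simp
    have b0: "0 \<le> b" using order_trans[OF less_imp_le[OF assms(1)] assms(2)] assms(3) by (meson order_trans)
    have "?N (A *v y) \<le> sqrt b * norm (A *v y)" by (rule vMn_bounds(2)[OF assms])
    also have "\<dots> \<le> sqrt b * (B * norm y)" by (rule mult_left_mono[OF B(2)]) (use b0 in simp)
    also have "\<dots> = (sqrt b * B / sqrt a) * (sqrt a * norm y)" using assms(1) by simp
    also have "\<dots> \<le> (sqrt b * B / sqrt a) * ?N y"
      apply (rule mult_left_mono[OF vMn_bounds(1)[OF assms]])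
      using B assms b0 by auto
    finally show "?N (A *v y) / ?N y \<le> sqrt b * B / sqrt a"
      using Npos[OF y] by (simp add: divide_le_eq)
  qed
  show "?N (A *v x) \<le> mat_Mnorm (Dm d) A * ?N x"
  proof (cases "x = 0")
    case True thus ?thesis by (simp add: vMn)
  next
    case False
    have "?N (A *v x) / ?N x \<le> mat_Mnorm (Dm d) A"
      unfolding mat_Mnorm_def by (rule cSUP_upper[OF _ bdd]) (use False in simp)
    thus ?thesis using Npos[OF False] by (simp add: divide_le_eq)
  qed
  obtain i :: 'a where True by blast
  have ax: "axis i (1::real) \<noteq> 0" by (simp add: axis_eq_0_iff)
  have "0 \<le> ?N (A *v axis i 1) / ?N (axis i 1)" using Nnn by simp
  also have "\<dots> \<le> mat_Mnorm (Dm d) A"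
    unfolding mat_Mnorm_def by (rule cSUP_upper[OF _ bdd]) (use ax in simp)
  finally show "0 \<le> mat_Mnorm (Dm d) A" .
qed

lemma ex_minmax: fixes f :: "'n::finite \<Rightarrow> real"
  shows "\<exists>k. \<forall>j. f k \<le> f j" "\<exists>k. \<forall>j. f j \<le> f k"
proof -
  have "Min (range f) \<in> range f" by (rule Min_in) auto
  then obtain k where "f k = Min (range f)" by (metis rangeE)
  thus "\<exists>k. \<forall>j. f k \<le> f j" by (intro exI[of _ k] allI) (simp add: Min_le)
  have "Max (range f) \<in> range f" by (rule Max_in) auto
  then obtain m where "f m = Max (range f)" by (metis rangeE)
  thus "\<exists>k. \<forall>j. f j \<le> f k" by (intro exI[of _ m] allI) (simp add: Max_ge)
qed

lemma vMn_sq: assumes "\<And>i. 0 \<le> d i"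
  shows "(vec_Mnorm (Dm d) x)^2 = (\<Sum>i\<in>UNIV. d i * (x$i)^2)"
  unfolding vMn using assms by (simp add: sum_nonneg)

lemma part1:
  assumes "0 < a" "\<And>i. a \<le> l i" "\<And>i. l i \<le> b" "\<And>j. 0 \<le> r j"
  shows "sqrt (\<Sum>i\<in>UNIV. \<Sum>j\<in>UNIV. l i * r j * ((A ** B)$i$j)^2)
     \<le> mat_Mnorm (Dm l) A * sqrt (\<Sum>i\<in>UNIV. \<Sum>j\<in>UNIV. l i * r j * (B$i$j)^2)"
proof -
  let ?K = "mat_Mnorm (Dm l) A"
  let ?N = "vec_Mnorm (Dm l)"
  have l0: "0 \<le> l i" for i using assms(1) assms(2)[of i] by linarith
  define c where "c j = (\<chi> i. B$i$j)" for j
  have AB: "(A ** B)$i$j = (A *v c j)$i" for i j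
    by (simp add: c_def matrix_matrix_mult_def matrix_vector_mult_def)
  have K0: "0 \<le> ?K" by (rule mnorm_props(2)[OF assms(1-3)])
  have "(\<Sum>i\<in>UNIV. \<Sum>j\<in>UNIV. l i * r j * ((A ** B)$i$j)^2) = (\<Sum>j\<in>UNIV. r j * (?N (A *v c j))^2)"
    unfolding vMn_sq[OF l0] sum_distrib_left AB by (subst sum.swap) (simp add: mult_ac)
  also have "\<dots> \<le> (\<Sum>j\<in>UNIV. r j * (?K^2 * (?N (c j))^2))"
  proof (rule sum_mono, rule mult_left_mono[OF _ assms(4)])
    fix j
    have "?N (A *v c j) \<le> ?K * ?N (c j)" by (rule mnorm_props(1)[OF assms(1-3)])
    moreover have "0 \<le> ?N (A *v c j)" by (simp add: vMn l0 sum_nonneg)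
    ultimately have "(?N (A *v c j))^2 \<le> (?K * ?N (c j))^2" by (rule power_mono)
    thus "(?N (A *v c j))^2 \<le> ?K^2 * (?N (c j))^2" by (simp add: power_mult_distrib)
  qed
  also have "\<dots> = ?K^2 * (\<Sum>i\<in>UNIV. \<Sum>j\<in>UNIV. l i * r j * (B$i$j)^2)"
    unfolding vMn_sq[OF l0] sum_distrib_left by (subst sum.swap) (simp add: mult_ac c_def)
  finally have "sqrt (\<Sum>i\<in>UNIV. \<Sum>j\<in>UNIV. l i * r j * ((A ** B)$i$j)^2) \<le> sqrt (?K^2 * (\<Sum>i\<in>UNIV. \<Sum>j\<in>UNIV. l i * r j * (B$i$j)^2))"
    by (rule real_sqrt_le_mono)
  thus ?thesis using K0 by (simp add: real_sqrt_mult)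
qed

lemma row_bound:
  assumes "0 < a" "\<And>i. a \<le> r i" "\<And>i. r i \<le> b"
  shows "(\<Sum>j\<in>UNIV. r j * ((y v* C)$j)^2) \<le> ((b/a) * mat_Mnorm (Dm r) C)^2 * (\<Sum>j\<in>UNIV. r j * (y$j)^2)"
proof -
  let ?K = "mat_Mnorm (Dm r) C"
  let ?N = "vec_Mnorm (Dm r)"
  have r0: "0 \<le> r i" for i using assms(1) assms(2)[of i] by linarith
  have b0: "0 < b" using assms(1) assms(2) assms(3) by (meson less_le_trans order_trans)
  have K0: "0 \<le> ?K" by (rule mnorm_props(2)[OF assms])
  define t where "t = ?K^2 * b / a"
  have t0: "0 \<le> t" unfolding t_def using K0 assms(1) b0 by simp
  have Cx: "(norm (C *v x))^2 \<le> t * (norm x)^2" for x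
  proof -
    have "a * (norm (C *v x))^2 \<le> (?N (C *v x))^2"
      unfolding vMn_sq[OF r0] by (rule wq_bounds(1)[OF assms(2,3)])
    also have "\<dots> \<le> (?K * ?N x)^2"
      by (rule power_mono[OF mnorm_props(1)[OF assms]]) (simp add: vMn r0 sum_nonneg)
    also have "\<dots> = ?K^2 * (?N x)^2" by (simp add: power_mult_distrib)
    also have "\<dots> \<le> ?K^2 * (b * (norm x)^2)"
      unfolding vMn_sq[OF r0] by (rule mult_left_mono[OF wq_bounds(2)[OF assms(2,3)]]) simp
    finally have "a * (norm (C *v x))^2 \<le> ?K^2 * (b * (norm x)^2)" .
    thus ?thesis unfolding t_def using assms(1) by (simp add: pos_le_divide_eq mult_ac divide_simps)
  qed
  have Cx': "norm (C *v x) \<le> sqrt t * norm x" for x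
    using Cx[of x] t0 by (metis norm_ge_zero real_sqrt_le_mono real_sqrt_mult real_sqrt_pow2 real_sqrt_unique zero_le_power2 real_sqrt_power)
  have CT: "(norm (y v* C))^2 \<le> t * (norm y)^2"
  proof -
    let ?u = "y v* C"
    have "(norm ?u)^2 = y \<bullet> (C *v ?u)" by (simp add: power2_norm_eq_inner dot_lmul_matrix)
    also have "\<dots> \<le> norm y * norm (C *v ?u)" by (rule norm_cauchy_schwarz)
    also have "\<dots> \<le> norm y * (sqrt t * norm ?u)" by (rule mult_left_mono[OF Cx']) simp
    finally have h: "(norm ?u)^2 \<le> norm y * sqrt t * norm ?u" by (simp add: mult_ac)
    have "norm ?u \<le> sqrt t * norm y"
    proof (cases "norm ?u = 0")
      case True thus ?thesis using t0 by simp
    next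
      case False
      hence "0 < norm ?u" by simp
      with h show ?thesis by (simp add: power2_eq_square mult_ac)
    qed
    hence "(norm ?u)^2 \<le> (sqrt t * norm y)^2" by (rule power_mono) simp
    thus ?thesis using t0 by (simp add: power_mult_distrib)
  qed
  have "(\<Sum>j\<in>UNIV. r j * ((y v* C)$j)^2) \<le> b * (norm (y v* C))^2" by (rule wq_bounds(2)[OF assms(2,3)])
  also have "\<dots> \<le> b * (t * (norm y)^2)" by (rule mult_left_mono[OF CT]) (use b0 in simp)
  also have "\<dots> = (b * t / a) * (a * (norm y)^2)" using assms(1) by simp
  also have "\<dots> \<le> (b * t / a) * (\<Sum>j\<in>UNIV. r j * (y$j)^2)"
    by (rule mult_left_mono[OF wq_bounds(1)[OF assms(2,3)]]) (use b0 t0 assms(1) in simp)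
  also have "b * t / a = ((b/a) * ?K)^2" unfolding t_def by (simp add: power2_eq_square)
  finally show ?thesis .
qed

lemma Dm_axis: "Dm e *v axis k 1 = e k *\<^sub>R axis k 1"
  by (simp add: Dm_mulv vec_eq_iff axis_def)

lemma cond_lb:
  assumes "\<And>i. 0 < e i"
  shows "e k / e m \<le> cond (Dm e)"
proof -
  obtain k0 where k0: "\<And>j. e k0 \<le> e j" using ex_minmax(1)[of e] by blast
  have e0: "0 < e k0" by (rule assms)
  have low: "e k0 \<le> norm (Dm e *v x)" if "norm x = 1" for x
  proof -
    have "(e k0)^2 * (norm x)^2 \<le> (\<Sum>i\<in>UNIV. (e i)^2 * (x$i)^2)"
      unfolding norm2_vec sum_distrib_left
      by (rule sum_mono) (use k0 e0 in \<open>auto intro!: mult_right_mono power_mono\<close>)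
    also have "\<dots> = (norm (Dm e *v x))^2" by (simp add: norm2_vec Dm_mulv power_mult_distrib)
    finally have "(e k0)^2 \<le> (norm (Dm e *v x))^2" using that by simp
    thus ?thesis using e0 by (simp add: power2_le_iff_abs_le)
  qed
  have ne: "{x::real^'a. norm x = 1} \<noteq> {}" using norm_axis_1[of k] by blast
  have smin0: "e k0 \<le> sigma_min (Dm e)"
    unfolding sigma_min_def by (rule cINF_greatest[OF ne]) (use low in simp)
  have sminle: "sigma_min (Dm e) \<le> e m"
  proof -
    have "sigma_min (Dm e) \<le> norm (Dm e *v axis m 1)"
      unfolding sigma_min_def by (rule cINF_lower) (auto simp: norm_axis_1 intro: bdd_belowI[of _ 0])
    thus ?thesis using assms[of m] by (simp add: Dm_axis norm_axis_1)
  qed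
  obtain B where B: "0 < B" "\<And>y. norm (Dm e *v y) \<le> B * norm y"
    using linear_bounded_pos[OF matrix_vector_mul_linear] by blast
  have smax: "e k \<le> sigma_max (Dm e)"
  proof -
    have "norm (Dm e *v axis k 1) \<le> sigma_max (Dm e)"
      unfolding sigma_max_def
      by (rule cSUP_upper) (auto simp: norm_axis_1 intro!: bdd_aboveI[of _ B] B(2)[THEN order_trans])
    thus ?thesis using assms[of k] by (simp add: Dm_axis norm_axis_1)
  qed
  show ?thesis unfolding cond_def
    by (rule frac_le) (use smax assms[of k] smin0 e0 sminle in auto)
qed

lemma BC_row: "(B ** C)$i$j = (B$i v* C)$j"
  by (simp add: matrix_matrix_mult_def vector_matrix_mult_def)

theorem lemma3p5:
  fixes L :: "real^'n1^'n1" and R :: "real^'n2^'n2"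
    and A :: "real^'n1^'n1" and B :: "real^'n2^'n1" and C :: "real^'n2^'n2"
  assumes "is_pos_diag L" and "is_pos_diag R"
  shows "wnorm L R (A ** B) \<le> mat_Mnorm (diag_powr L (1/4)) A * wnorm L R B \<and>
         wnorm L R (B ** C) \<le> cond (diag_powr R (-1/4)) * wnorm L R B * mat_Mnorm (diag_powr R (1/4)) C"
proof -
  define l where "l i = L$i$i powr (1/4)" for i
  define r where "r j = R$j$j powr (1/4)" for j
  have Lp: "0 < L$i$i" for i using assms(1) by (simp add: is_pos_diag_def)
  have Rp: "0 < R$j$j" for j using assms(2) by (simp add: is_pos_diag_def)
  have l0: "0 < l i" for i using Lp[of i] by (simp add: l_def)
  have r0: "0 < r j" for j using Rp[of j] by (simp add: r_def)
  obtain kl where kl: "\<And>j. l kl \<le> l j" using ex_minmax(1)[of l] by blast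
  obtain ml where ml: "\<And>j. l j \<le> l ml" using ex_minmax(2)[of l] by blast
  obtain kr where kr: "\<And>j. r kr \<le> r j" using ex_minmax(1)[of r] by blast
  obtain mr where mr: "\<And>j. r j \<le> r mr" using ex_minmax(2)[of r] by blast
  have W: "wnorm L R Z = sqrt (\<Sum>i\<in>UNIV. \<Sum>j\<in>UNIV. l i * r j * (Z$i$j)^2)" for Z
    unfolding wnorm_eq l_def r_def ..
  have P1: "wnorm L R (A ** B) \<le> mat_Mnorm (diag_powr L (1/4)) A * wnorm L R B"
    unfolding W diag_powr_Dm l_def[symmetric]
    by (rule part1[OF l0 kl ml]) (use r0 in \<open>simp add: less_imp_le\<close>)
  define K where "K = mat_Mnorm (Dm r) C"
  define q where "q = cond (diag_powr R (-1/4))"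
  define S where "S = (\<Sum>i\<in>UNIV. \<Sum>j\<in>UNIV. l i * r j * (B$i$j)^2)"
  have K0: "0 \<le> K" unfolding K_def by (rule mnorm_props(2)[OF r0 kr mr])
  have e: "diag_powr R (-1/4) = Dm (\<lambda>j. inverse (r j))"
    unfolding diag_powr_Dm r_def
    by (simp add: powr_minus[symmetric])
  have qb: "r mr / r kr \<le> q"
    using cond_lb[of "\<lambda>j. inverse (r j)" kr mr] r0 unfolding q_def e
    by (simp add: divide_inverse mult.commute)
  have q0: "0 \<le> q" using qb r0[of mr] r0[of kr] by (smt (verit) divide_pos_pos)
  have "(\<Sum>i\<in>UNIV. \<Sum>j\<in>UNIV. l i * r j * ((B ** C)$i$j)^2)
      = (\<Sum>i\<in>UNIV. l i * (\<Sum>j\<in>UNIV. r j * ((B$i v* C)$j)^2))"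
    by (simp add: BC_row sum_distrib_left mult.assoc)
  also have "\<dots> \<le> (\<Sum>i\<in>UNIV. l i * (((r mr / r kr) * K)^2 * (\<Sum>j\<in>UNIV. r j * (B$i$j)^2)))"
    unfolding K_def
    by (rule sum_mono, rule mult_left_mono[OF row_bound[OF r0 kr mr]]) (use l0 in \<open>simp add: less_imp_le\<close>)
  also have "\<dots> = ((r mr / r kr) * K)^2 * S"
    unfolding S_def by (simp add: sum_distrib_left mult_ac)
  also have "\<dots> \<le> (q * K)^2 * S"
  proof (rule mult_right_mono)
    show "0 \<le> S" unfolding S_def using l0 r0 by (auto intro!: sum_nonneg simp: less_imp_le)
    show "((r mr / r kr) * K)^2 \<le> (q * K)^2"
      by (rule power_mono[OF mult_right_mono[OF qb K0]]) (use K0 r0[of mr] r0[of kr] in simp)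
  qed
  finally have "sqrt (\<Sum>i\<in>UNIV. \<Sum>j\<in>UNIV. l i * r j * ((B ** C)$i$j)^2) \<le> sqrt ((q * K)^2 * S)"
    by (rule real_sqrt_le_mono)
  also have "\<dots> = q * sqrt S * K" using q0 K0 by (simp add: real_sqrt_mult)
  finally have P2: "wnorm L R (B ** C) \<le> cond (diag_powr R (-1/4)) * wnorm L R B * mat_Mnorm (diag_powr R (1/4)) C"
    unfolding W q_def S_def K_def diag_powr_Dm r_def .
  show ?thesis using P1 P2 by blast
qed

end
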